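(* Let $0<\beta<1$ and $0<\gamma<n$. If $b$ is a locally integrable function on $\mathbb{R}^n$ such that, for some $s(\cdot)\in\mathscr{B}(\mathbb{R}^n)$ and some constant $C$, $$\sup_{Q}\frac{1}{|Q|^{\beta/n}}\frac{\big\|\big(b-|Q|^{-\gamma/n}M_{\gamma,Q}(b)\big)\chi_Q\big\|_{L^{s(\cdot)}(\mathbb{R}^n)}}{\|\chi_Q\|_{L^{s(\cdot)}(\mathbb{R}^n)}}\le C,$$ (supremum over all cubes $Q\subset\mathbb{R}^n$), then $b\in\dot{\Lambda}_\beta(\mathbb{R}^n)$.
   Context: Cubes have sides parallel to the coordinate axes; $|Q|$ is Lebesgue measure and $\chi_Q$ the characteristic function. For a fixed cube $Q_0$ and $\gamma\ge0$, $M_{\gamma,Q_0}(f)(x)=\sup\{|Q|^{\gamma/n-1}\int_Q|f(y)|\,dy : x\in Q\subseteq Q_0\}$ for $x\in Q_0$. For $0<\beta<1$, $\dot{\Lambda}_\beta(\mathbb{R}^n)$ is the set of functions $b$ with $|b(x)-b(y)|\le C|x-y|^\beta$ for all $x,y$. For measurable $p(\cdot):\mathbb{R}^n\to[1,\infty)$, $L^{p(\cdot)}(\mathbb{R}^n)$ is the space of measurable $f$ with $\int(|f(x)|/\lambda)^{p(x)}dx<\infty$ for some $\lambda>0$, normed by $\|f\|_{L^{p(\cdot)}}=\inf\{\lambda>0:\int(|f(x)|/\lambda)^{p(x)}dx\le1\}$. $\mathscr{B}(\mathbb{R}^n)$ is the set of measurable $p(\cdot):\mathbb{R}^n\to[1,\infty)$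 with $1<\operatorname{ess\,inf}p$, $\operatorname{ess\,sup}p<\infty$, such that the Hardy–Littlewood maximal function $M(f)(x)=\sup_{Q\ni x}|Q|^{-1}\int_Q|f|$ is bounded on $L^{p(\cdot)}(\mathbb{R}^n)$. *)

theory Defs
  imports "HOL-Analysis.Analysis"
begin

text \<open>Cubes with sides parallel to the coordinate axes (closed; boundaries are null sets).\<close>
definition is_cube :: "'a::euclidean_space set \<Rightarrow> bool" where
  "is_cube Q \<longleftrightarrow> (\<exists>a h. h > 0 \<and> Q = cbox a (a + h *\<^sub>R One))"

definition locally_integrable :: "('a::euclidean_space \<Rightarrow> real) \<Rightarrow> bool" where
  "locally_integrable f \<longleftrightarrow> (\<forall>K. compact K \<longrightarrow> set_integrable lebesgue K f)"

definition epowr :: "ennreal \<Rightarrow> real \<Rightarrow> ennreal" where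
  "epowr x p = (if x = \<infinity> then \<infinity> else ennreal (enn2real x powr p))"

text \<open>Modular and Luxemburg norm of L^{p(.)}, for [0,inf]-valued functions (|f|).
  The norm is infinity if no admissible lambda exists.\<close>
definition vmod :: "('a::euclidean_space \<Rightarrow> real) \<Rightarrow> ('a \<Rightarrow> ennreal) \<Rightarrow> real \<Rightarrow> ennreal" where
  "vmod p F lam = (\<integral>\<^sup>+ x. epowr (F x / ennreal lam) (p x) \<partial>lebesgue)"

definition vnorm :: "('a::euclidean_space \<Rightarrow> real) \<Rightarrow> ('a \<Rightarrow> ennreal) \<Rightarrow> ennreal" where
  "vnorm p F = Inf {ennreal lam | lam. lam > 0 \<and> vmod p F lam \<le> 1}"

definition in_Lp :: "('a::euclidean_space \<Rightarrow> real) \<Rightarrow> ('a \<Rightarrow> real) \<Rightarrow> bool" where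
  "in_Lp p f \<longleftrightarrow> f \<in> borel_measurable lebesgue \<and>
     (\<exists>lam>0. vmod p (\<lambda>x. ennreal \<bar>f x\<bar>) lam < \<infinity>)"

definition HL_max :: "('a::euclidean_space \<Rightarrow> real) \<Rightarrow> 'a \<Rightarrow> ennreal" where
  "HL_max f x = (SUP Q\<in>{Q. is_cube Q \<and> x \<in> Q}.
      (\<integral>\<^sup>+ y\<in>Q. ennreal \<bar>f y\<bar> \<partial>lebesgue) / emeasure lebesgue Q)"

definition class_B :: "('a::euclidean_space \<Rightarrow> real) set" where
  "class_B = {p. p \<in> borel_measurable lebesgue \<and> (\<forall>x. 1 \<le> p x) \<and>
      (\<exists>pm pM. 1 < pm \<and> pM < \<infinity> \<and> (AE x in lebesgue. pm \<le> p x \<and> p x \<le> pM)) \<and>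
      (\<exists>C. \<forall>f. in_Lp p f \<longrightarrow>
          vnorm p (HL_max f) \<le> ennreal C * vnorm p (\<lambda>x. ennreal \<bar>f x\<bar>))}"

text \<open>Fractional maximal function relative to a cube Q0 (extended-real valued;
  meaningful for x in Q0).\<close>
definition frac_max :: "real \<Rightarrow> 'a::euclidean_space set \<Rightarrow> ('a \<Rightarrow> real) \<Rightarrow> 'a \<Rightarrow> ereal" where
  "frac_max \<gamma> Q0 f x = (SUP Q\<in>{Q. is_cube Q \<and> x \<in> Q \<and> Q \<subseteq> Q0}.
      ereal (measure lebesgue Q powr (\<gamma> / real DIM('a) - 1) *
             (\<integral>y\<in>Q. \<bar>f y\<bar> \<partial>lebesgue)))"

definition osc_fun :: "real \<Rightarrow> ('a::euclidean_space \<Rightarrow> real) \<Rightarrow> 'a set \<Rightarrow> 'a \<Rightarrow> ennreal" where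
  "osc_fun \<gamma> b Q x = e2ennreal \<bar>ereal (b x) -
      ereal (measure lebesgue Q powr (- \<gamma> / real DIM('a))) * frac_max \<gamma> Q b x\<bar> * indicator Q x"

definition lip_space :: "real \<Rightarrow> ('a::euclidean_space \<Rightarrow> real) set" where
  "lip_space \<beta> = {b. \<exists>C. \<forall>x y. \<bar>b x - b y\<bar> \<le> C * norm (x - y) powr \<beta>}"

end

theory Submission
  imports Defs
begin


definition cube :: "'a::euclidean_space \<Rightarrow> real \<Rightarrow> 'a set" where
  "cube a h = cbox a (a + h *\<^sub>R One)"

lemma mem_cube: "x \<in> cube a h \<longleftrightarrow> (\<forall>i\<in>Basis. a \<bullet> i \<le> x \<bullet> i \<and> x \<bullet> i \<le> a \<bullet> i + h)"
  by (auto simp: cube_def mem_box inner_simps)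

lemma cube_is_cube: "h > 0 \<Longrightarrow> is_cube (cube a h)"
  unfolding is_cube_def cube_def by blast

lemma is_cube_cube: "is_cube Q \<Longrightarrow> \<exists>a h. h > 0 \<and> Q = cube a h"
  unfolding is_cube_def cube_def by blast

lemma measure_cube: "h \<ge> 0 \<Longrightarrow> measure lebesgue (cube (a::'a::euclidean_space) h) = h ^ DIM('a)"
  by (simp add: cube_def inner_simps)

lemma emeasure_cube: "h \<ge> 0 \<Longrightarrow> emeasure lebesgue (cube (a::'a::euclidean_space) h) = ennreal (h ^ DIM('a))"
proof -
  assume h: "h \<ge> 0"
  have "emeasure lebesgue (cube a h) = emeasure lborel (cube a h)"
    by (simp add: cube_def)
  also have "\<dots> = ennreal (h ^ DIM('a))"
    using h by (simp add: cube_def emeasure_lborel_cbox_eq inner_simps)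
  finally show ?thesis .
qed

lemma cube_sets[measurable]: "cube a h \<in> sets lebesgue"
  by (simp add: cube_def)

lemma compact_cube: "compact (cube a h)" by (simp add: cube_def)

lemma cube_subset: "(\<forall>i\<in>Basis. a \<bullet> i \<le> c \<bullet> i \<and> c \<bullet> i + h \<le> a \<bullet> i + k) \<Longrightarrow> cube c h \<subseteq> cube a k"
  by (auto simp: mem_cube) (smt (verit))+



lemma set_int_mono_set:
  fixes f :: "'a \<Rightarrow> real"
  assumes "set_integrable M B f" "A \<in> sets M" "A \<subseteq> B" "\<And>x. x \<in> B \<Longrightarrow> 0 \<le> f x"
  shows "(LINT x:A|M. f x) \<le> (LINT x:B|M. f x)"
proof -
  have iA: "set_integrable M A f" using set_integrable_subset assms by blast
  show ?thesis
    unfolding set_lebesgue_integral_def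
    apply (rule integral_mono)
    using iA assms(1) apply (auto simp: set_integrable_def)
    using assms(3,4) by (auto simp: indicator_def)
qed

definition avg :: "('a::euclidean_space \<Rightarrow> real) \<Rightarrow> 'a \<Rightarrow> real \<Rightarrow> real" where
  "avg b a h = (LINT x:cube a h|lebesgue. b x) / h ^ DIM('a)"

locale camp =
  fixes b :: "'a::euclidean_space \<Rightarrow> real" and K \<beta> :: real
  assumes li: "locally_integrable b" and beta: "0 < \<beta>"
    and osc: "\<And>a h. h > 0 \<Longrightarrow> (LINT x:cube a h|lebesgue. \<bar>b x - avg b a h\<bar>) \<le> K * h powr \<beta> * h ^ DIM('a)"
begin

lemma int_cube: "set_integrable lebesgue (cube a h) b"
  using li compact_cube unfolding locally_integrable_def by blast

lemma cube_fin: "emeasure lebesgue (cube a h) < \<infinity>"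
  using emeasure_lborel_cbox_finite[of a "a + h *\<^sub>R One"] by (simp add: cube_def)

lemma int_cube_c: "set_integrable lebesgue (cube a h) (\<lambda>x. c::real)"
proof -
  have "integrable lebesgue (\<lambda>x. c * indicator (cube a h) x)"
    using cube_fin[of a h] by (intro integrable_mult_right) (auto simp: integrable_indicator_iff)
  thus ?thesis unfolding set_integrable_def by (simp add: mult.commute)
qed

lemma int_cube_abs: "set_integrable lebesgue (cube a h) (\<lambda>x. \<bar>b x - c\<bar>)"
  using set_integrable_abs[OF set_integral_diff(1)[OF int_cube int_cube_c]] .

lemma int_cube_const: "h \<ge> 0 \<Longrightarrow> (LINT x:cube (a::'a) h|lebesgue. (c::real)) = c * h ^ DIM('a)"
  using cube_fin[of a h] by (subst set_integral_const) (auto simp: measure_cube)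

lemma K_nonneg: "0 \<le> K"
proof -
  have "0 \<le> (LINT x:cube (0::'a) 1|lebesgue. \<bar>b x - avg b 0 1\<bar>)"
    unfolding set_lebesgue_integral_def by (rule Bochner_Integration.integral_nonneg) (auto simp: indicator_def)
  also have "\<dots> \<le> K" using osc[of 1 0] by simp
  finally show ?thesis .
qed

lemma B1:
  assumes h1: "0 < h1" and h2: "0 < h2" and sub: "cube a1 h1 \<subseteq> cube a2 h2"
  shows "\<bar>avg b a1 h1 - avg b a2 h2\<bar> \<le> (h2 / h1) ^ DIM('a) * K * h2 powr \<beta>"
proof -
  define m where "m = avg b a2 h2"
  have "(LINT x:cube a1 h1|lebesgue. b x - m) = (LINT x:cube a1 h1|lebesgue. b x) - m * h1 ^ DIM('a)"
    using set_integral_diff(2)[OF int_cube int_cube_c] int_cube_const h1 by simp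
  hence eq: "avg b a1 h1 - m = (LINT x:cube a1 h1|lebesgue. b x - m) / h1 ^ DIM('a)"
    using h1 by (simp add: avg_def field_simps)
  have "\<bar>LINT x:cube a1 h1|lebesgue. b x - m\<bar> \<le> (LINT x:cube a1 h1|lebesgue. \<bar>b x - m\<bar>)"
    using set_integral_norm_bound[OF set_integral_diff(1)[OF int_cube int_cube_c]] by simp
  also have "\<dots> \<le> (LINT x:cube a2 h2|lebesgue. \<bar>b x - m\<bar>)"
    by (rule set_int_mono_set[OF int_cube_abs _ sub]) auto
  also have "\<dots> \<le> K * h2 powr \<beta> * h2 ^ DIM('a)"
    unfolding m_def by (rule osc[OF h2])
  finally have "\<bar>avg b a1 h1 - m\<bar> \<le> K * h2 powr \<beta> * h2 ^ DIM('a) / h1 ^ DIM('a)"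
    unfolding eq using h1 by (simp add: divide_right_mono abs_divide)
  also have "\<dots> = (h2 / h1) ^ DIM('a) * K * h2 powr \<beta>"
    by (simp add: power_divide)
  finally show ?thesis unfolding m_def .
qed

end


lemma powr_power_pos: "0 < (x::real) \<Longrightarrow> (x ^ k) powr \<beta> = (x powr \<beta>) ^ k"
  by (induction k) (auto simp: powr_mult)

context camp begin

definition "r = (1/2::real) powr \<beta>"
definition "D = 2 ^ DIM('a) * K"
definition "E = D / (1 - r)"

lemma r_pos: "0 < r" unfolding r_def by simp
lemma r_less: "r < 1" unfolding r_def using powr_less_mono2[OF beta, of "1/2" 1] by simp

lemma D_nonneg: "0 \<le> D" unfolding D_def using K_nonneg by simp
lemma E_nonneg: "0 \<le> E" unfolding E_def using D_nonneg r_less by simp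

lemma half_powr: "0 < s \<Longrightarrow> (s / 2 ^ j) powr \<beta> = s powr \<beta> * r ^ j"
proof -
  assume s: "0 < s"
  have "(s / 2 ^ j) powr \<beta> = s powr \<beta> * ((1/2) ^ j) powr \<beta>"
    using s by (simp add: powr_mult[symmetric] power_one_over field_simps)
  also have "((1/2::real) ^ j) powr \<beta> = r ^ j" unfolding r_def by (rule powr_power_pos) simp
  finally show ?thesis .
qed

lemma step: assumes s: "0 < s" shows "\<bar>avg b x s - avg b x (s/2)\<bar> \<le> D * s powr \<beta>"
proof -
  have sub: "cube x (s/2) \<subseteq> cube x s"
    by (rule cube_subset) (use s in auto)
  have "\<bar>avg b x (s/2) - avg b x s\<bar> \<le> (s / (s/2)) ^ DIM('a) * K * s powr \<beta>"
    by (rule B1) (use s sub in auto)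
  thus ?thesis using s by (simp add: D_def abs_minus_commute)
qed

lemma tele: assumes s: "0 < s"
  shows "\<bar>avg b x s - avg b x (s / 2 ^ j)\<bar> \<le> D * s powr \<beta> * (\<Sum>i<j. r ^ i)"
proof (induction j)
  case 0 then show ?case by simp
next
  case (Suc j)
  have "\<bar>avg b x (s / 2 ^ j) - avg b x (s / 2 ^ j / 2)\<bar> \<le> D * (s / 2 ^ j) powr \<beta>"
    by (rule step) (use s in simp)
  also have "\<dots> = D * s powr \<beta> * r ^ j" using half_powr[OF s] by simp
  finally have "\<bar>avg b x (s / 2 ^ j) - avg b x (s / 2 ^ Suc j)\<bar> \<le> D * s powr \<beta> * r ^ j"
    by (simp add: field_simps)
  with Suc show ?case by (simp add: algebra_simps)
qed

lemma geo: "(\<Sum>i<j. r ^ i) \<le> 1 / (1 - r)"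
  using r_less r_pos by (simp add: sum_gp_strict divide_right_mono)

lemma tele2: assumes s: "0 < s"
  shows "\<bar>avg b x s - avg b x (s / 2 ^ j)\<bar> \<le> E * s powr \<beta>"
proof -
  have "D * s powr \<beta> * (\<Sum>i<j. r ^ i) \<le> D * s powr \<beta> * (1 / (1 - r))"
    by (rule mult_left_mono[OF geo]) (use D_nonneg in simp)
  thus ?thesis using tele[OF s, of x j] by (simp add: E_def)
qed

definition "seqa x k = avg b x (1 / 2 ^ k)"

lemma seqa_diff: "\<bar>seqa x k - seqa x (k + j)\<bar> \<le> E * r ^ k"
proof -
  have "\<bar>avg b x (1/2^k) - avg b x ((1/2^k) / 2 ^ j)\<bar> \<le> E * (1/2^k) powr \<beta>"
    by (rule tele2) simp
  moreover have "(1/2^k::real) powr \<beta> = r ^ k" using half_powr[of 1 k] by simp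
  ultimately show ?thesis by (simp add: seqa_def power_add)
qed

lemma seqa_cauchy: "Cauchy (seqa x)"
proof (rule CauchyI)
  fix e :: real assume e: "0 < e"
  obtain M where M: "r ^ M < e / (2 * (E + 1))"
    using real_arch_pow_inv[of "e / (2 * (E + 1))" r] e E_nonneg r_less by auto
  have "E * r ^ M \<le> (E + 1) * r ^ M" using r_pos by simp
  also have "\<dots> < (E + 1) * (e / (2 * (E + 1)))" by (rule mult_strict_left_mono) (use M E_nonneg in auto)
  also have "\<dots> = e / 2" proof - have "E + 1 > 0" using E_nonneg by simp thus ?thesis by (simp add: field_simps) qed
  finally have EM: "E * r ^ M < e / 2" .
  show "\<exists>M. \<forall>m\<ge>M. \<forall>n\<ge>M. norm (seqa x m - seqa x n) < e"
  proof (intro exI allI impI)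
    fix m n assume "M \<le> m" "M \<le> n"
    then have "\<bar>seqa x M - seqa x m\<bar> \<le> E * r ^ M" "\<bar>seqa x M - seqa x n\<bar> \<le> E * r ^ M"
      using seqa_diff[of x M "m - M"] seqa_diff[of x M "n - M"] by auto
    then show "norm (seqa x m - seqa x n) < e" using EM by simp
  qed
qed

definition "b' x = lim (seqa x)"

lemma seqa_lim: "seqa x \<longlonglongrightarrow> b' x"
  unfolding b'_def using seqa_cauchy Cauchy_convergent_iff convergent_LIMSEQ_iff by blast

lemma seqa_tail: "\<bar>seqa x k - b' x\<bar> \<le> E * r ^ k"
proof -
  have "(\<lambda>j. \<bar>seqa x k - seqa x (j + k)\<bar>) \<longlonglongrightarrow> \<bar>seqa x k - b' x\<bar>"
    by (intro tendsto_intros LIMSEQ_ignore_initial_segment seqa_lim)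
  moreover have "\<forall>j\<ge>0. \<bar>seqa x k - seqa x (j + k)\<bar> \<le> E * r ^ k"
    using seqa_diff[of x k] by (simp add: add.commute)
  ultimately show ?thesis by (intro LIMSEQ_le_const2) auto
qed

end


lemma inner_sum_Basis: "i \<in> Basis \<Longrightarrow> (\<Sum>j\<in>Basis. f j *\<^sub>R j) \<bullet> (i::'a::euclidean_space) = f i"
  by (simp add: inner_sum_left inner_Basis if_distrib sum.delta cong: if_cong)

context camp begin

definition "C3 = E + (2 ^ DIM('a) * K + E) * 2 powr \<beta>"

lemma G: assumes s: "0 < s" shows "\<bar>avg b x s - b' x\<bar> \<le> C3 * s powr \<beta>"
proof -
  obtain j where j: "s < 2 ^ j" using real_arch_pow[of 2 s] by auto
  define t where "t = s / 2 ^ j"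
  have t0: "0 < t" and t1: "t \<le> 1" and ts: "t \<le> s"
    using s j by (auto simp: t_def field_simps)
  obtain m0 where m0: "(1/2::real) ^ m0 < t" using real_arch_pow_inv[OF t0, of "1/2"] by auto
  define P where "P = (\<lambda>m. 1 / 2 ^ (m + 1) < t)"
  have "1 / 2 ^ (m0 + 1) \<le> (1/2::real) ^ m0" by (simp add: power_one_over field_simps)
  hence Pm0: "P m0" unfolding P_def using m0 by linarith
  define m where "m = (LEAST m. P m)"
  have Pm: "P m" unfolding m_def using Pm0 by (rule LeastI)
  have tm: "t \<le> 1 / 2 ^ m"
  proof (cases m)
    case 0 then show ?thesis using t1 by simp
  next
    case (Suc k)
    have "\<not> P k" using not_less_Least[of k P] Suc m_def by auto
    then show ?thesis using Suc unfolding P_def by simp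
  qed
  have m2t: "1 / 2 ^ m < 2 * t" using Pm unfolding P_def by (simp add: field_simps)
  have sub: "cube x t \<subseteq> cube x (1 / 2 ^ m)" by (rule cube_subset) (use tm in auto)
  have B: "\<bar>avg b x t - avg b x (1 / 2 ^ m)\<bar> \<le> ((1 / 2 ^ m) / t) ^ DIM('a) * K * (1 / 2 ^ m) powr \<beta>"
    by (rule B1[OF t0 _ sub]) simp
  have q: "(1 / 2 ^ m) / t \<le> 2" using m2t t0 by (simp add: field_simps)
  have pw: "(1 / 2 ^ m :: real) powr \<beta> \<le> 2 powr \<beta> * t powr \<beta>"
  proof -
    have "(1 / 2 ^ m :: real) powr \<beta> \<le> (2 * t) powr \<beta>" using m2t beta by (intro powr_mono2) auto
    thus ?thesis using t0 by (simp add: powr_mult)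
  qed
  have "((1 / 2 ^ m) / t) ^ DIM('a) * K * (1 / 2 ^ m) powr \<beta> \<le> 2 ^ DIM('a) * K * (2 powr \<beta> * t powr \<beta>)"
    apply (rule mult_mono[OF mult_right_mono pw])
    using q t0 K_nonneg by (auto intro!: power_mono)
  with B have B': "\<bar>avg b x t - seqa x m\<bar> \<le> 2 ^ DIM('a) * K * (2 powr \<beta> * t powr \<beta>)"
    by (simp add: seqa_def)
  have "(1 / 2 ^ m :: real) powr \<beta> = r ^ m" using half_powr[of 1 m] by simp
  hence T: "\<bar>seqa x m - b' x\<bar> \<le> E * (2 powr \<beta> * t powr \<beta>)"
    using seqa_tail[of x m] pw E_nonneg by (smt (verit) mult_left_mono)
  have T2: "\<bar>avg b x s - avg b x t\<bar> \<le> E * s powr \<beta>" unfolding t_def by (rule tele2[OF s])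
  have tsb: "t powr \<beta> \<le> s powr \<beta>" using ts t0 beta by (intro powr_mono2) auto
  have "\<bar>avg b x s - b' x\<bar> \<le> E * s powr \<beta> + (2 ^ DIM('a) * K + E) * 2 powr \<beta> * t powr \<beta>"
    using B' T T2 by (simp add: algebra_simps)
  also have "\<dots> \<le> E * s powr \<beta> + (2 ^ DIM('a) * K + E) * 2 powr \<beta> * s powr \<beta>"
    using tsb K_nonneg E_nonneg by (intro add_left_mono mult_left_mono) auto
  finally show ?thesis by (simp add: C3_def algebra_simps)
qed

definition "C2 = C3 + 2 * 2 ^ DIM('a) * K * 2 powr \<beta>"

lemma B2: assumes h: "0 < h" and x: "x \<in> cube a h"
  shows "\<bar>b' x - avg b a h\<bar> \<le> C2 * h powr \<beta>"
proof -
  have s1: "cube x h \<subseteq> cube a (2 * h)" by (rule cube_subset) (use x in \<open>auto simp: mem_cube\<close>)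
  have s2: "cube a h \<subseteq> cube a (2 * h)" by (rule cube_subset) (use h in auto)
  have e2: "(2 * h) powr \<beta> = 2 powr \<beta> * h powr \<beta>" using h by (simp add: powr_mult)
  have "\<bar>avg b x h - avg b a (2*h)\<bar> \<le> (2 * h / h) ^ DIM('a) * K * (2 * h) powr \<beta>"
    by (rule B1[OF h _ s1]) (use h in simp)
  hence 1: "\<bar>avg b x h - avg b a (2*h)\<bar> \<le> 2 ^ DIM('a) * K * 2 powr \<beta> * h powr \<beta>"
    using h e2 by simp
  have "\<bar>avg b a h - avg b a (2*h)\<bar> \<le> (2 * h / h) ^ DIM('a) * K * (2 * h) powr \<beta>"
    by (rule B1[OF h _ s2]) (use h in simp)
  hence 2: "\<bar>avg b a h - avg b a (2*h)\<bar> \<le> 2 ^ DIM('a) * K * 2 powr \<beta> * h powr \<beta>"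
    using h e2 by simp
  have 3: "\<bar>avg b x h - b' x\<bar> \<le> C3 * h powr \<beta>" by (rule G[OF h])
  show ?thesis using 1 2 3 unfolding C2_def by (simp add: algebra_simps)
qed

lemma C2_nonneg: "0 \<le> C2"
proof -
  have "\<bar>b' 0 - avg b 0 1\<bar> \<le> C2 * 1 powr \<beta>" by (rule B2) (auto simp: mem_cube)
  thus ?thesis by simp
qed

lemma holder: "\<bar>b' x - b' y\<bar> \<le> (2 * C2) * norm (x - y) powr \<beta>"
proof (cases "x = y")
  case True then show ?thesis by simp
next
  case False
  define h where "h = norm (x - y)"
  have h: "0 < h" using False by (simp add: h_def)
  define a where "a = (\<Sum>i\<in>Basis. min (x \<bullet> i) (y \<bullet> i) *\<^sub>R i)"
  have ai: "a \<bullet> i = min (x \<bullet> i) (y \<bullet> i)" if "i \<in> Basis" for i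
    unfolding a_def using that by (rule inner_sum_Basis)
  have d: "\<bar>x \<bullet> i - y \<bullet> i\<bar> \<le> h" if "i \<in> Basis" for i
    using Basis_le_norm[OF that, of "x - y"] by (simp add: h_def inner_diff_left)
  have xin: "x \<in> cube a h" unfolding mem_cube using ai d by fastforce
  have yin: "y \<in> cube a h" unfolding mem_cube using ai d by fastforce
  show ?thesis using B2[OF h xin] B2[OF h yin] unfolding h_def[symmetric] by simp
qed

lemma b'_lip: "b' \<in> lip_space \<beta>"
  unfolding lip_space_def using holder by blast

lemma b'_cont: "continuous_on UNIV b'"
  unfolding continuous_on_iff
proof (intro ballI allI impI)
  fix x :: 'a and e :: real assume e: "0 < e"
  define L where "L = 2 * C2 + 1"
  have L: "0 < L" using C2_nonneg by (simp add: L_def)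
  define d where "d = (e / L) powr (1 / \<beta>)"
  have d: "0 < d" using e L by (simp add: d_def)
  show "\<exists>d>0. \<forall>x'\<in>UNIV. dist x' x < d \<longrightarrow> dist (b' x') (b' x) < e"
  proof (intro exI conjI ballI impI, fact d)
    fix y assume "dist y x < d"
    hence "norm (y - x) powr \<beta> < d powr \<beta>" using beta by (intro powr_less_mono2) (auto simp: dist_norm)
    also have "d powr \<beta> = e / L" using e L beta by (simp add: d_def powr_powr)
    finally have lt: "norm (y - x) powr \<beta> < e / L" .
    have "\<bar>b' y - b' x\<bar> \<le> (2 * C2) * norm (y - x) powr \<beta>" by (rule holder)
    also have "\<dots> \<le> L * norm (y - x) powr \<beta>" by (rule mult_right_mono) (auto simp: L_def)
    also have "\<dots> < L * (e / L)" by (rule mult_strict_left_mono[OF lt L])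
    also have "\<dots> = e" using L by simp
    finally show "dist (b' y) (b' x) < e" by (simp add: dist_real_def)
  qed
qed

lemma b'_meas: "b' \<in> borel_measurable lebesgue"
proof -
  have "b' \<in> borel_measurable borel" using b'_cont by (rule borel_measurable_continuous_onI)
  hence "b' \<in> borel_measurable lborel" by simp
  thus ?thesis by (rule measurable_completion)
qed

end


lemma epowr_mono: assumes q: "0 \<le> q" and xy: "x \<le> y" shows "epowr x q \<le> epowr y q"
proof (cases "y = \<infinity>")
  case True then show ?thesis by (simp add: epowr_def)
next
  case False
  then have x: "x \<noteq> \<infinity>" using xy top.extremum_unique by fastforce
  have "enn2real x \<le> enn2real y" using xy False by (simp add: enn2real_mono less_top)
  then have "enn2real x powr q \<le> enn2real y powr q" using q by (intro powr_mono2) auto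
  then show ?thesis using x False by (simp add: epowr_def ennreal_leI)
qed

lemma vmod_mono: assumes "\<And>x. F x \<le> G x" "\<And>x. 0 \<le> p x"
  shows "vmod p F lam \<le> vmod p G lam"
  unfolding vmod_def
  by (intro nn_integral_mono epowr_mono assms divide_right_mono_ennreal)

lemma vnorm_mono: assumes "\<And>x. F x \<le> G x" "\<And>x. 0 \<le> p x"
  shows "vnorm p F \<le> vnorm p G"
  unfolding vnorm_def
proof (rule Inf_superset_mono, rule subsetI)
  fix z assume "z \<in> {ennreal lam |lam. 0 < lam \<and> vmod p G lam \<le> 1}"
  then obtain lam where z: "z = ennreal lam" "0 < lam" "vmod p G lam \<le> 1" by blast
  have "vmod p F lam \<le> 1" using vmod_mono[OF assms, where lam=lam] z(3) by (rule order_trans)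
  then show "z \<in> {ennreal lam |lam. 0 < lam \<and> vmod p F lam \<le> 1}" using z by blast
qed

lemma vnorm_fin: assumes "vnorm p F < \<infinity>" shows "\<exists>lam>0. vmod p F lam \<le> 1"
proof (rule ccontr)
  assume "\<not> ?thesis"
  then have "{ennreal lam | lam. lam > 0 \<and> vmod p F lam \<le> 1} = {}" by blast
  then have "vnorm p F = Inf {}" unfolding vnorm_def by (simp only:)
  then have "vnorm p F = top" by simp
  with assms show False by simp
qed

lemma div_scale: assumes c: "0 < c" and lam: "0 < lam"
  shows "z / ennreal (lam / c) = ennreal c * z / ennreal lam"
proof -
  have "z / ennreal (lam / c) = z * ennreal (c / lam)"
    using c lam by (simp add: divide_ennreal_def inverse_ennreal)
  also have "\<dots> = ennreal c * z / ennreal lam"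
    using c lam by (simp add: divide_ennreal_def inverse_ennreal ennreal_mult[symmetric] mult_ac divide_inverse)
  finally show ?thesis .
qed

lemma vnorm_scale: assumes c: "0 \<le> c"
  shows "ennreal c * vnorm p F \<le> vnorm p (\<lambda>x. ennreal c * F x)"
proof (cases "c = 0")
  case True then show ?thesis by simp
next
  case False
  with c have c: "0 < c" by simp
  show ?thesis unfolding vnorm_def[of p "\<lambda>x. ennreal c * F x"]
  proof (rule Inf_greatest, safe)
    fix lam assume lam: "0 < lam" and v: "vmod p (\<lambda>x. ennreal c * F x) lam \<le> 1"
    have "vmod p F (lam / c) = vmod p (\<lambda>x. ennreal c * F x) lam"
      unfolding vmod_def using div_scale[OF c lam] by simp
    then have "vnorm p F \<le> ennreal (lam / c)"
      unfolding vnorm_def using v lam c by (intro Inf_lower) auto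
    then have "ennreal c * vnorm p F \<le> ennreal c * ennreal (lam / c)" by (rule mult_left_mono) simp
    also have "\<dots> = ennreal lam" using c lam by (subst ennreal_mult[symmetric]) auto
    finally show "ennreal c * vnorm p F \<le> ennreal lam" .
  qed
qed

lemma epowr_ind: assumes L: "0 < L"
  shows "epowr ((indicator Q x :: ennreal) / ennreal L) q = ennreal ((1 / L) powr q) * indicator Q x"
proof (cases "x \<in> Q")
  case True
  have "(1::ennreal) / ennreal L = ennreal (1 / L)"
    using divide_ennreal[of 1 L] L by simp
  then show ?thesis using True L by (simp add: epowr_def)
qed (simp add: epowr_def)

lemma vmod_ind: assumes L: "0 < L" and Q: "Q \<in> sets lebesgue"
  shows "vmod p (indicator Q) L = (\<integral>\<^sup>+ x. ennreal ((1 / L) powr p x) * indicator Q x \<partial>lebesgue)"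
  unfolding vmod_def by (simp only: epowr_ind[OF L])

lemma vnorm_ind:
  assumes p: "\<And>x. 1 \<le> p x" and Q: "Q \<in> sets lebesgue" and mu: "emeasure lebesgue Q = ennreal \<mu>" "0 < \<mu>"
  shows "0 < vnorm p (indicator Q)" "vnorm p (indicator Q) < \<infinity>"
proof -
  define L where "L = max 1 \<mu>"
  have L: "0 < L" "1 \<le> L" "\<mu> \<le> L" by (auto simp: L_def)
  have "vmod p (indicator Q) L \<le> (\<integral>\<^sup>+ x. ennreal (1 / L) * indicator Q x \<partial>lebesgue)"
    unfolding vmod_ind[OF L(1) Q]
  proof (intro nn_integral_mono mult_right_mono ennreal_leI)
    fix x show "(1 / L) powr p x \<le> 1 / L"
      using powr_mono'[of 1 "p x" "1/L"] p[of x] L by simp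
  qed simp
  also have "\<dots> = ennreal (1 / L) * ennreal \<mu>" using Q mu by (simp add: nn_integral_cmult_indicator)
  also have "\<dots> = ennreal (\<mu> / L)" using L mu by (simp add: ennreal_mult[symmetric])
  also have "\<dots> \<le> 1" using L mu by simp
  finally have "vnorm p (indicator Q) \<le> ennreal L"
    unfolding vnorm_def using L by (intro Inf_lower) auto
  then show "vnorm p (indicator Q) < \<infinity>" by (simp add: le_less_trans)
  have "ennreal (min 1 \<mu>) \<le> vnorm p (indicator Q)"
    unfolding vnorm_def
  proof (rule Inf_greatest, safe, rule ccontr)
    fix lam assume lam: "0 < lam" and v: "vmod p (indicator Q) lam \<le> 1" and nl: "\<not> ennreal (min 1 \<mu>) \<le> ennreal lam"
    then have ll: "lam < min 1 \<mu>" by (meson ennreal_leI not_le)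
    have "(\<integral>\<^sup>+ x. ennreal (1 / lam) * indicator Q x \<partial>lebesgue) \<le> vmod p (indicator Q) lam"
      unfolding vmod_ind[OF lam Q]
    proof (intro nn_integral_mono mult_right_mono ennreal_leI)
      fix x
      have "1 \<le> 1 / lam" using ll lam by (simp add: field_simps)
      then show "1 / lam \<le> (1 / lam) powr p x"
        using powr_mono[of 1 "p x" "1/lam"] p[of x] lam by simp
    qed simp
    also have "\<dots> \<le> 1" by (rule v)
    finally have "ennreal (1 / lam) * ennreal \<mu> \<le> 1" using Q mu by (simp add: nn_integral_cmult_indicator)
    then have "ennreal (\<mu> / lam) \<le> 1" using lam mu by (simp add: ennreal_mult[symmetric])
    then have "\<mu> / lam \<le> 1" by simp
    then show False using ll lam by (simp add: field_simps)
  qed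
  moreover have "0 < ennreal (min 1 \<mu>)" using mu by simp
  ultimately show "0 < vnorm p (indicator Q)" by (rule order.strict_trans2[rotated])
qed



lemma cover:
  fixes N :: nat and a x :: "'a::euclidean_space"
  assumes N: "N \<ge> 1" and h0: "0 < h0" and x: "x \<in> cube a h0"
  shows "\<exists>k\<in>PiE Basis (\<lambda>_. {..<N}). x \<in> cube (a + (h0/N) *\<^sub>R (\<Sum>i\<in>Basis. real (k i) *\<^sub>R i)) (h0/N)"
proof -
  define t where "t = h0 / N"
  have t: "0 < t" using N h0 by (simp add: t_def)
  define k where "k = (\<lambda>i. if i \<in> Basis then min (N - 1) (nat \<lfloor>(x \<bullet> i - a \<bullet> i) / t\<rfloor>) else undefined)"
  have kI: "k \<in> PiE Basis (\<lambda>_. {..<N})" using N by (auto simp: k_def PiE_iff extensional_def)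
  have "x \<in> cube (a + t *\<^sub>R (\<Sum>i\<in>Basis. real (k i) *\<^sub>R i)) t"
    unfolding mem_cube
  proof (intro ballI)
    fix i :: 'a assume i: "i \<in> Basis"
    have ci: "(a + t *\<^sub>R (\<Sum>i\<in>Basis. real (k i) *\<^sub>R i)) \<bullet> i = a \<bullet> i + t * real (k i)"
      using i by (simp add: inner_simps inner_sum_Basis)
    define u where "u = (x \<bullet> i - a \<bullet> i) / t"
    have xi: "a \<bullet> i \<le> x \<bullet> i" "x \<bullet> i \<le> a \<bullet> i + h0" using x i by (auto simp: mem_cube)
    have u0: "0 \<le> u" using xi t by (simp add: u_def)
    have "u \<le> h0 / t" unfolding u_def using xi t by (intro divide_right_mono) auto
    also have "h0 / t = N" using N h0 by (simp add: t_def)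
    finally have uN: "u \<le> N" .
    have ki: "k i = min (N - 1) (nat \<lfloor>u\<rfloor>)" using i by (simp add: k_def u_def)
    have "real (k i) \<le> real (nat \<lfloor>u\<rfloor>)" using ki by simp
    also have "\<dots> = of_int \<lfloor>u\<rfloor>" using u0 by simp
    also have "\<dots> \<le> u" by simp
    finally have "real (k i) \<le> u" .
    moreover have "u \<le> real (k i) + 1"
    proof (cases "nat \<lfloor>u\<rfloor> \<le> N - 1")
      case True
      then have "k i = nat \<lfloor>u\<rfloor>" using ki by simp
      then show ?thesis using u0 by simp
    next
      case False
      then have "k i = N - 1" using ki by simp
      then show ?thesis using uN N by simp
    qed
    ultimately have "t * real (k i) \<le> x \<bullet> i - a \<bullet> i" "x \<bullet> i - a \<bullet> i \<le> t * real (k i) + t"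
      using t by (auto simp: u_def field_simps)
    then show "(a + t *\<^sub>R (\<Sum>i\<in>Basis. real (k i) *\<^sub>R i)) \<bullet> i \<le> x \<bullet> i \<and>
        x \<bullet> i \<le> (a + t *\<^sub>R (\<Sum>i\<in>Basis. real (k i) *\<^sub>R i)) \<bullet> i + t"
      unfolding ci by simp
  qed
  then show ?thesis using kI unfolding t_def by blast
qed

context camp begin

lemma meas_Q: "(\<lambda>x. \<bar>b x - b' x\<bar> * indicator (cube c h) x) \<in> borel_measurable lebesgue"
proof -
  have m1: "(\<lambda>x. indicator (cube c h) x * b x) \<in> borel_measurable lebesgue"
    using int_cube[of c h] unfolding set_integrable_def by (simp add: borel_measurable_integrable)
  have m2: "(\<lambda>x. indicator (cube c h) x * b' x) \<in> borel_measurable lebesgue"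
    using b'_meas by measurable
  have eq: "(\<lambda>x. \<bar>b x - b' x\<bar> * indicator (cube c h) x) =
      (\<lambda>x. \<bar>indicator (cube c h) x * b x - indicator (cube c h) x * b' x\<bar>)"
    by (auto simp: fun_eq_iff indicator_def)
  show ?thesis unfolding eq using m1 m2 by measurable
qed

lemma EC: assumes h: "0 < h"
  shows "(\<integral>\<^sup>+ x. ennreal (\<bar>b x - b' x\<bar> * indicator (cube a h) x) \<partial>lebesgue)
     \<le> ennreal ((K + C2) * h powr \<beta> * h ^ DIM('a))"
proof -
  define c where "c = C2 * h powr \<beta>"
  define g where "g = (\<lambda>x. indicator (cube a h) x *\<^sub>R (\<bar>b x - avg b a h\<bar> + c))"
  have sig: "set_integrable lebesgue (cube a h) (\<lambda>x. \<bar>b x - avg b a h\<bar> + c)"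
    by (rule set_integral_add(1)[OF int_cube_abs int_cube_c])
  hence ig: "integrable lebesgue g" unfolding g_def set_integrable_def .
  have c0: "0 \<le> c" using C2_nonneg by (simp add: c_def)
  have pt: "ennreal (\<bar>b x - b' x\<bar> * indicator (cube a h) x) \<le> ennreal (g x)" for x
  proof (cases "x \<in> cube a h")
    case True
    have "\<bar>b' x - avg b a h\<bar> \<le> c" unfolding c_def by (rule B2[OF h True])
    then have "\<bar>b x - b' x\<bar> \<le> \<bar>b x - avg b a h\<bar> + c" by (smt (verit))
    then show ?thesis using True by (intro ennreal_leI) (simp add: g_def)
  qed simp
  have "(\<integral>\<^sup>+ x. ennreal (\<bar>b x - b' x\<bar> * indicator (cube a h) x) \<partial>lebesgue) \<le> (\<integral>\<^sup>+ x. ennreal (g x) \<partial>lebesgue)"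
    by (rule nn_integral_mono) (rule pt)
  also have "\<dots> = ennreal (integral\<^sup>L lebesgue g)"
    using c0 by (intro nn_integral_eq_integral ig) (auto simp: g_def indicator_def)
  also have "integral\<^sup>L lebesgue g = (LINT x:cube a h|lebesgue. \<bar>b x - avg b a h\<bar> + c)"
    by (simp add: g_def set_lebesgue_integral_def)
  also have "\<dots> = (LINT x:cube a h|lebesgue. \<bar>b x - avg b a h\<bar>) + c * h ^ DIM('a)"
    using set_integral_add(2)[OF int_cube_abs int_cube_c] int_cube_const h by simp
  finally have I: "(\<integral>\<^sup>+ x. ennreal (\<bar>b x - b' x\<bar> * indicator (cube a h) x) \<partial>lebesgue)
     \<le> ennreal ((LINT x:cube a h|lebesgue. \<bar>b x - avg b a h\<bar>) + c * h ^ DIM('a))" .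
  have "(LINT x:cube a h|lebesgue. \<bar>b x - avg b a h\<bar>) + c * h ^ DIM('a) \<le> (K + C2) * h powr \<beta> * h ^ DIM('a)"
    using osc[OF h] by (simp add: c_def algebra_simps)
  then show ?thesis using I by (meson ennreal_leI order_trans)
qed

end



context camp begin

lemma big_bound:
  fixes N :: nat
  assumes N: "N \<ge> 1" and h0: "0 < h0"
  shows "(\<integral>\<^sup>+ x. ennreal (\<bar>b x - b' x\<bar> * indicator (cube a h0) x) \<partial>lebesgue)
     \<le> ennreal ((K + C2) * (h0 / N) powr \<beta> * h0 ^ DIM('a))"
proof -
  define t where "t = h0 / N"
  have t: "0 < t" using N h0 by (simp add: t_def)
  define I where "I = PiE (Basis::'a set) (\<lambda>_. {..<N})"
  define Qk where "Qk = (\<lambda>k. cube (a + t *\<^sub>R (\<Sum>i\<in>Basis. real (k i) *\<^sub>R i)) t)"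
  have finI: "finite I" unfolding I_def by (intro finite_PiE) auto
  have cardI: "card I = N ^ DIM('a)" unfolding I_def by (simp add: card_PiE)
  define f where "f = (\<lambda>x. \<bar>b x - b' x\<bar>)"
  have pt: "ennreal (f x * indicator (cube a h0) x) \<le> (\<Sum>k\<in>I. ennreal (f x * indicator (Qk k) x))" for x
  proof (cases "x \<in> cube a h0")
    case True
    then obtain k where k: "k \<in> I" "x \<in> Qk k" using cover[OF N h0 True] unfolding I_def Qk_def t_def by blast
    have "ennreal (f x * indicator (cube a h0) x) = ennreal (f x * indicator (Qk k) x)"
      using True k by simp
    also have "\<dots> \<le> (\<Sum>k\<in>I. ennreal (f x * indicator (Qk k) x))"
      by (rule member_le_sum) (use k finI in auto)
    finally show ?thesis .
  qed simp
  have "(\<integral>\<^sup>+ x. ennreal (f x * indicator (cube a h0) x) \<partial>lebesgue)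
      \<le> (\<integral>\<^sup>+ x. (\<Sum>k\<in>I. ennreal (f x * indicator (Qk k) x)) \<partial>lebesgue)"
    by (rule nn_integral_mono) (rule pt)
  also have "\<dots> = (\<Sum>k\<in>I. \<integral>\<^sup>+ x. ennreal (f x * indicator (Qk k) x) \<partial>lebesgue)"
    by (rule nn_integral_sum) (use meas_Q in \<open>auto simp: f_def Qk_def\<close>)
  also have "\<dots> \<le> (\<Sum>k\<in>I. ennreal ((K + C2) * t powr \<beta> * t ^ DIM('a)))"
    by (rule sum_mono) (unfold f_def Qk_def, rule EC[OF t])
  also have "\<dots> = of_nat (card I) * ennreal ((K + C2) * t powr \<beta> * t ^ DIM('a))"
    by simp
  also have "\<dots> = ennreal (real (N ^ DIM('a)) * ((K + C2) * t powr \<beta> * t ^ DIM('a)))"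
    unfolding cardI by (simp add: ennreal_mult' ennreal_of_nat_eq_real_of_nat)
  also have "real (N ^ DIM('a)) * ((K + C2) * t powr \<beta> * t ^ DIM('a)) = (K + C2) * t powr \<beta> * (real N * t) ^ DIM('a)"
    by (simp add: power_mult_distrib)
  also have "real N * t = h0" using N by (simp add: t_def)
  finally show ?thesis unfolding f_def t_def .
qed

lemma int_zero: assumes h0: "0 < h0"
  shows "(\<integral>\<^sup>+ x. ennreal (\<bar>b x - b' x\<bar> * indicator (cube a h0) x) \<partial>lebesgue) = 0"
proof -
  define X where "X = (\<integral>\<^sup>+ x. ennreal (\<bar>b x - b' x\<bar> * indicator (cube a h0) x) \<partial>lebesgue)"
  define M0 where "M0 = (K + C2) * h0 ^ DIM('a)"
  have M0: "0 \<le> M0" using K_nonneg C2_nonneg h0 by (simp add: M0_def)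
  have "X \<le> 0"
  proof (rule ennreal_le_epsilon)
    fix e :: real assume e: "0 < e"
    define q where "q = (e / (M0 + 1)) powr (1 / \<beta>)"
    have q: "0 < q" using e M0 by (simp add: q_def)
    obtain N :: nat where N: "h0 / q < N" using reals_Archimedean2 by blast
    have N1: "N \<ge> 1" using N h0 q by (cases N) (auto simp: field_simps)
    have hq: "h0 / N < q" using N q h0 N1 by (simp add: field_simps)
    have "(h0 / N) powr \<beta> < q powr \<beta>" using hq beta h0 N1 by (intro powr_less_mono2) auto
    also have "q powr \<beta> = e / (M0 + 1)" using e M0 beta by (simp add: q_def powr_powr)
    finally have lt: "(h0 / N) powr \<beta> < e / (M0 + 1)" .
    have "M0 * (h0 / N) powr \<beta> \<le> (M0 + 1) * (h0 / N) powr \<beta>" by (simp add: algebra_simps)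
    also have "\<dots> \<le> (M0 + 1) * (e / (M0 + 1))" using lt M0 by (intro mult_left_mono) auto
    also have "\<dots> = e" using M0 by simp
    finally have le: "M0 * (h0 / N) powr \<beta> \<le> e" .
    have "X \<le> ennreal ((K + C2) * (h0 / N) powr \<beta> * h0 ^ DIM('a))"
      unfolding X_def by (rule big_bound[OF N1 h0])
    also have "(K + C2) * (h0 / N) powr \<beta> * h0 ^ DIM('a) = M0 * (h0 / N) powr \<beta>"
      by (simp add: M0_def algebra_simps)
    finally show "X \<le> 0 + ennreal e" using le by (simp add: order_trans ennreal_leI)
  qed
  thus ?thesis unfolding X_def by simp
qed

lemma ae_cube: assumes h0: "0 < h0" shows "AE x in lebesgue. x \<in> cube a h0 \<longrightarrow> b x = b' x"
proof -
  have m: "(\<lambda>x. ennreal (\<bar>b x - b' x\<bar> * indicator (cube a h0) x)) \<in> borel_measurable lebesgue"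
    using meas_Q by measurable
  have "AE x in lebesgue. ennreal (\<bar>b x - b' x\<bar> * indicator (cube a h0) x) = 0"
    using int_zero[OF h0] nn_integral_0_iff_AE[OF m] by simp
  then show ?thesis by eventually_elim (auto simp: indicator_def)
qed

lemma ae_eq: "AE x in lebesgue. b x = b' x"
proof -
  define Qm where "Qm = (\<lambda>m::nat. cube (- (real m + 1) *\<^sub>R (One::'a)) (2 * (real m + 1)))"
  have "AE x in lebesgue. \<forall>m. x \<in> Qm m \<longrightarrow> b x = b' x"
    unfolding AE_all_countable Qm_def by (intro allI ae_cube) simp
  moreover have "\<exists>m. x \<in> Qm m" for x
  proof -
    obtain m :: nat where m: "norm x \<le> real m" using real_arch_simple by blast
    have "x \<in> Qm m" unfolding Qm_def mem_cube
    proof (intro ballI)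
      fix i :: 'a assume i: "i \<in> Basis"
      have "\<bar>x \<bullet> i\<bar> \<le> norm x" using Basis_le_norm[OF i] by simp
      then show "(- (real m + 1) *\<^sub>R One) \<bullet> i \<le> x \<bullet> i \<and> x \<bullet> i \<le> (- (real m + 1) *\<^sub>R One) \<bullet> i + 2 * (real m + 1)"
        using m i by (simp add: inner_simps) linarith
    qed
    then show ?thesis by blast
  qed
  ultimately show ?thesis by (auto elim!: eventually_mono)
qed

end

lemma campanato:
  fixes b :: "'a::euclidean_space \<Rightarrow> real"
  assumes "locally_integrable b" "0 < \<beta>"
    "\<And>a h. h > 0 \<Longrightarrow> (LINT x:cube a h|lebesgue. \<bar>b x - avg b a h\<bar>) \<le> K * h powr \<beta> * h ^ DIM('a)"
  shows "\<exists>b'. (AE x in lebesgue. b x = b' x) \<and> b' \<in> lip_space \<beta>"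
proof -
  interpret camp b K \<beta> by unfold_locales (use assms in auto)
  show ?thesis using ae_eq b'_lip by blast
qed



lemma li_cube: "locally_integrable b \<Longrightarrow> set_integrable lebesgue (cube a h) b"
  using compact_cube unfolding locally_integrable_def by blast

lemma cube_fin': "emeasure lebesgue (cube a h) < \<infinity>"
  using emeasure_lborel_cbox_finite[of a "a + h *\<^sub>R One"] by (simp add: cube_def)

lemma cube_c: "set_integrable lebesgue (cube a h) (\<lambda>x. c::real)"
proof -
  have "integrable lebesgue (\<lambda>x. c * indicator (cube a h) x)"
    using cube_fin'[of a h] by (intro integrable_mult_right) (auto simp: integrable_indicator_iff)
  thus ?thesis unfolding set_integrable_def by (simp add: mult.commute)
qed

lemma cube_const: "h \<ge> 0 \<Longrightarrow> (LINT x:cube (a::'a::euclidean_space) h|lebesgue. (c::real)) = c * h ^ DIM('a)"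
  using cube_fin'[of a h] by (subst set_integral_const) (auto simp: measure_cube)

lemma partA:
  fixes b s :: "'a::euclidean_space \<Rightarrow> real" and \<beta> \<gamma> C Cs h :: real
  assumes li: "locally_integrable b" and s1: "\<And>x. 1 \<le> s x"
    and Cs: "\<And>f. in_Lp s f \<Longrightarrow> vnorm s (HL_max f) \<le> ennreal Cs * vnorm s (\<lambda>x. ennreal \<bar>f x\<bar>)"
    and h: "0 < h"
    and hyp: "vnorm s (osc_fun \<gamma> b (cube a h)) /
           (ennreal (measure lebesgue (cube a h) powr (\<beta> / real DIM('a))) * vnorm s (indicator (cube a h)))
         \<le> ennreal C"
  shows "(LINT x:cube a h|lebesgue. \<bar>b x - avg b a h\<bar>) \<le> 2 * max 0 Cs * max 0 C * h powr \<beta> * h ^ DIM('a)"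
proof -
  define Q where "Q = cube a h"
  define n where "n = DIM('a)"
  define \<mu> where "\<mu> = h ^ n"
  have mu: "0 < \<mu>" using h by (simp add: \<mu>_def)
  have Qs: "Q \<in> sets lebesgue" by (simp add: Q_def)
  have eQ: "emeasure lebesgue Q = ennreal \<mu>" unfolding Q_def \<mu>_def n_def by (rule emeasure_cube) (use h in simp)
  have mQ: "measure lebesgue Q = \<mu>" using h by (simp add: Q_def \<mu>_def n_def measure_cube)
  have s0: "\<And>x. 0 \<le> s x" using s1 by (smt (verit))
  define V where "V = vnorm s (indicator Q :: 'a \<Rightarrow> ennreal)"
  have V0: "0 < V" and Vf: "V < \<infinity>" using vnorm_ind[OF s1 Qs eQ mu] by (auto simp: V_def)
  define v where "v = enn2real V"
  have Vv: "V = ennreal v" using Vf by (simp add: v_def)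
  have v0: "0 < v" using V0 Vv by (metis ennreal_less_zero_iff)
  define hb where "hb = h powr \<beta>"
  have hb: "0 < hb" using h by (simp add: hb_def)
  have "measure lebesgue Q powr (\<beta> / real n) = hb"
  proof -
    have n0: "0 < real n" by (simp add: n_def)
    have "\<mu> = h powr real n" using h by (simp add: \<mu>_def powr_realpow)
    then show ?thesis using h n0 by (simp add: mQ powr_powr hb_def)
  qed
  then have PV: "ennreal (measure lebesgue Q powr (\<beta> / real n)) * V = ennreal (hb * v)"
    using hb v0 Vv by (simp add: ennreal_mult)
  define Nosc where "Nosc = vnorm s (osc_fun \<gamma> b Q)"
  have hyp': "Nosc / ennreal (hb * v) \<le> ennreal C"
    using hyp PV unfolding Nosc_def Q_def n_def V_def by simp
  have Nosc: "Nosc \<le> ennreal C * ennreal (hb * v)"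
  proof -
    have "Nosc = Nosc / ennreal (hb * v) * ennreal (hb * v)"
      using hb v0 by (simp add: ennreal_divide_times ennreal_divide_self)
    also have "\<dots> \<le> ennreal C * ennreal (hb * v)" by (rule mult_right_mono[OF hyp']) simp
    finally show ?thesis .
  qed
  define m where "m = avg b a h"
  define f where "f = (\<lambda>x. max 0 (m - b x) * indicator Q x)"
  have f0: "0 \<le> f x" for x by (simp add: f_def)
  have ib: "set_integrable lebesgue Q b" unfolding Q_def by (rule li_cube[OF li])
  have ic: "set_integrable lebesgue Q (\<lambda>x. m)" unfolding Q_def by (rule cube_c)
  have intf: "integrable lebesgue f"
  proof -
    have "integrable lebesgue (\<lambda>x. max 0 (indicator Q x *\<^sub>R (m - b x)))"
      using set_integral_diff(1)[OF ic ib] unfolding set_integrable_def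
      by (intro integrable_max) auto
    moreover have "(\<lambda>x. max 0 (indicator Q x *\<^sub>R (m - b x))) = f"
      by (auto simp: f_def fun_eq_iff indicator_def)
    ultimately show ?thesis by simp
  qed
  have fmeas: "f \<in> borel_measurable lebesgue" using intf by (rule borel_measurable_integrable)
  have A1: "ennreal \<bar>f x\<bar> \<le> osc_fun \<gamma> b Q x" for x
  proof (cases "x \<in> Q")
    case False then show ?thesis by (simp add: f_def)
  next
    case True
    define I where "I = (LINT y:Q|lebesgue. \<bar>b y\<bar>)"
    define F where "F = frac_max \<gamma> Q b x"
    have cQ: "is_cube Q" unfolding Q_def using h by (rule cube_is_cube)
    have F: "ereal (\<mu> powr (\<gamma> / real n - 1) * I) \<le> F"
      unfolding F_def frac_max_def I_def
      using cQ True mQ by (intro SUP_upper2[of Q]) (auto simp: n_def)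
    define w where "w = \<mu> powr (- \<gamma> / real n)"
    have w: "0 < w" using mu by (simp add: w_def)
    have wI: "w * (\<mu> powr (\<gamma> / real n - 1) * I) = I / \<mu>"
    proof -
      have "w * \<mu> powr (\<gamma> / real n - 1) = \<mu> powr (- \<gamma> / real n + (\<gamma> / real n - 1))"
        unfolding w_def by (simp only: powr_add)
      also have "\<dots> = \<mu> powr (-1)" by simp
      also have "\<dots> = 1 / \<mu>" using mu by (simp add: powr_minus divide_inverse)
      finally have e: "w * \<mu> powr (\<gamma> / real n - 1) = 1 / \<mu>" .
      have "w * (\<mu> powr (\<gamma> / real n - 1) * I) = (w * \<mu> powr (\<gamma> / real n - 1)) * I"
        by (rule mult.assoc[symmetric])
      also have "\<dots> = (1 / \<mu>) * I" by (simp only: e)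
      finally show ?thesis by simp
    qed
    have mI: "m \<le> I / \<mu>"
    proof -
      have "(LINT y:Q|lebesgue. b y) \<le> I" unfolding I_def
        by (rule set_integral_mono[OF ib set_integrable_abs[OF ib]]) simp
      then show ?thesis using mu by (simp add: m_def avg_def Q_def[symmetric] \<mu>_def[symmetric] n_def[symmetric] divide_right_mono)
    qed
    have osc: "osc_fun \<gamma> b Q x = e2ennreal \<bar>ereal (b x) - ereal w * F\<bar>"
      using True by (simp add: osc_fun_def w_def F_def mQ n_def)
    show ?thesis
    proof (cases F)
      case (real r)
      have "w * (\<mu> powr (\<gamma> / real n - 1) * I) \<le> w * r" using F real w by simp
      then have "m - b x \<le> \<bar>b x - w * r\<bar>" using wI mI by linarith
      then have "\<bar>f x\<bar> \<le> \<bar>b x - w * r\<bar>" using True by (simp add: f_def)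
      then show ?thesis unfolding osc using real by (simp add: ennreal_leI)
    next
      case PInf
      then show ?thesis unfolding osc using w by simp
    next
      case MInf
      then show ?thesis using F by simp
    qed
  qed
  have A2: "vnorm s (\<lambda>x. ennreal \<bar>f x\<bar>) \<le> ennreal C * ennreal (hb * v)"
    using vnorm_mono[OF A1 s0] Nosc unfolding Nosc_def by (rule order_trans)
  have A3: "in_Lp s f"
  proof -
    have lt: "ennreal C * ennreal (hb * v) < \<infinity>" by (simp add: ennreal_mult_less_top)
    have "vnorm s (\<lambda>x. ennreal \<bar>f x\<bar>) < \<infinity>" using A2 lt by (rule le_less_trans)
    then obtain lam where lam: "lam > 0" "vmod s (\<lambda>x. ennreal \<bar>f x\<bar>) lam \<le> 1" using vnorm_fin by blast
    have "vmod s (\<lambda>x. ennreal \<bar>f x\<bar>) lam < \<infinity>" using lam(2) by (rule le_less_trans) simp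
    then show ?thesis unfolding in_Lp_def using fmeas lam(1) by blast
  qed
  define c where "c = integral\<^sup>L lebesgue f / \<mu>"
  have c0: "0 \<le> c" using mu f0 by (simp add: c_def)
  have A4: "ennreal c * indicator Q x \<le> HL_max f x" for x
  proof (cases "x \<in> Q")
    case True
    have cQ: "is_cube Q" unfolding Q_def using h by (rule cube_is_cube)
    have "(\<integral>\<^sup>+ y\<in>Q. ennreal \<bar>f y\<bar> \<partial>lebesgue) = (\<integral>\<^sup>+ y. ennreal (f y) \<partial>lebesgue)"
      by (intro nn_integral_cong) (auto simp: f_def indicator_def)
    also have "\<dots> = ennreal (integral\<^sup>L lebesgue f)"
      using f0 by (intro nn_integral_eq_integral intf) auto
    finally have e: "(\<integral>\<^sup>+ y\<in>Q. ennreal \<bar>f y\<bar> \<partial>lebesgue) / emeasure lebesgue Q = ennreal c"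
      unfolding eQ c_def using mu f0 by (simp add: divide_ennreal)
    have "(\<integral>\<^sup>+ y\<in>Q. ennreal \<bar>f y\<bar> \<partial>lebesgue) / emeasure lebesgue Q \<le> HL_max f x"
      unfolding HL_max_def using cQ True by (intro SUP_upper) auto
    then show ?thesis using True e by simp
  qed simp
  have "ennreal c * ennreal v \<le> vnorm s (\<lambda>x. ennreal c * indicator Q x)"
    using vnorm_scale[OF c0, of s "indicator Q"] Vv V_def by simp
  also have "\<dots> \<le> vnorm s (HL_max f)" by (rule vnorm_mono[OF A4 s0])
  also have "\<dots> \<le> ennreal Cs * vnorm s (\<lambda>x. ennreal \<bar>f x\<bar>)" by (rule Cs[OF A3])
  also have "\<dots> \<le> ennreal Cs * (ennreal C * ennreal (hb * v))" by (rule mult_left_mono[OF A2]) simp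
  also have "\<dots> = ennreal (max 0 Cs) * (ennreal (max 0 C) * ennreal (hb * v))"
    by (simp only: ennreal_max_0)
  also have "\<dots> = ennreal (max 0 Cs * max 0 C * hb * v)"
    using hb v0 by (simp add: ennreal_mult mult.assoc)
  finally have "ennreal (c * v) \<le> ennreal (max 0 Cs * max 0 C * hb * v)"
    using c0 v0 by (simp add: ennreal_mult)
  then have "c * v \<le> max 0 Cs * max 0 C * hb * v"
    using hb v0 by (subst (asm) ennreal_le_iff) auto
  then have cle: "c \<le> max 0 Cs * max 0 C * hb" using v0 by simp
  then have intle: "integral\<^sup>L lebesgue f \<le> max 0 Cs * max 0 C * hb * \<mu>"
    using mu by (simp add: c_def divide_le_eq)
  have ibm: "set_integrable lebesgue Q (\<lambda>x. b x - m)" by (rule set_integral_diff(1)[OF ib ic])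
  have ipos: "set_integrable lebesgue Q (\<lambda>x. max 0 (m - b x))"
  proof -
    have "integrable lebesgue (\<lambda>x. max 0 (indicator Q x *\<^sub>R (m - b x)))"
      using set_integral_diff(1)[OF ic ib] unfolding set_integrable_def
      by (intro integrable_max) auto
    moreover have "(\<lambda>x. max 0 (indicator Q x *\<^sub>R (m - b x))) = (\<lambda>x. indicator Q x *\<^sub>R max 0 (m - b x))"
      by (auto simp: fun_eq_iff indicator_def)
    ultimately show ?thesis unfolding set_integrable_def by simp
  qed
  have z: "(LINT x:Q|lebesgue. b x - m) = 0"
  proof -
    have "(LINT x:Q|lebesgue. b x - m) = (LINT x:Q|lebesgue. b x) - m * \<mu>"
      using set_integral_diff(2)[OF ib ic] cube_const[of h a m] h by (simp add: Q_def \<mu>_def n_def)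
    also have "\<dots> = 0" using mu h by (simp add: m_def avg_def Q_def \<mu>_def n_def)
    finally show ?thesis .
  qed
  have "(LINT x:Q|lebesgue. \<bar>b x - m\<bar>) = (LINT x:Q|lebesgue. (b x - m) + 2 * max 0 (m - b x))"
    by (intro set_lebesgue_integral_cong) (auto simp: Qs abs_if max_def)
  also have "\<dots> = (LINT x:Q|lebesgue. b x - m) + 2 * (LINT x:Q|lebesgue. max 0 (m - b x))"
    using set_integral_add(2)[OF ibm set_integrable_mult_right[OF ipos, of 2]] by simp
  also have "(LINT x:Q|lebesgue. max 0 (m - b x)) = integral\<^sup>L lebesgue f"
    unfolding set_lebesgue_integral_def f_def by (simp add: mult.commute)
  finally have "(LINT x:Q|lebesgue. \<bar>b x - m\<bar>) = 2 * integral\<^sup>L lebesgue f" using z by simp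
  then show ?thesis using intle by (simp add: Q_def m_def hb_def \<mu>_def n_def)
qed



theorem lemma3p1:
  fixes b s :: "'a::euclidean_space \<Rightarrow> real" and \<beta> \<gamma> C :: real
  assumes "0 < \<beta>" "\<beta> < 1" "0 < \<gamma>" "\<gamma> < real DIM('a)"
    and "locally_integrable b"
    and "s \<in> class_B"
    and "(SUP Q\<in>{Q. is_cube Q}.
           vnorm s (osc_fun \<gamma> b Q) /
           (ennreal (measure lebesgue Q powr (\<beta> / real DIM('a))) * vnorm s (indicator Q)))
         \<le> ennreal C"
  shows "\<exists>b'. (AE x in lebesgue. b x = b' x) \<and> b' \<in> lip_space \<beta>"
proof -
  from assms(6) obtain Cs where s1: "\<forall>x. 1 \<le> s x"
    and Cs: "\<forall>f. in_Lp s f \<longrightarrow> vnorm s (HL_max f) \<le> ennreal Cs * vnorm s (\<lambda>x. ennreal \<bar>f x\<bar>)"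
    unfolding class_B_def by blast
  define K where "K = 2 * max 0 Cs * max 0 C"
  have osc: "(LINT x:cube a h|lebesgue. \<bar>b x - avg b a h\<bar>) \<le> K * h powr \<beta> * h ^ DIM('a)"
    if h: "h > 0" for a h
  proof -
    have hyp: "vnorm s (osc_fun \<gamma> b (cube a h)) /
           (ennreal (measure lebesgue (cube a h) powr (\<beta> / real DIM('a))) * vnorm s (indicator (cube a h)))
         \<le> ennreal C"
      by (rule order_trans[OF SUP_upper[of "cube a h"] assms(7)]) (simp add: cube_is_cube[OF h])
    show ?thesis
      using partA[OF assms(5) _ _ h hyp] s1 Cs unfolding K_def by blast
  qed
  show ?thesis by (rule campanato[OF assms(5) assms(1) osc])
qed


end
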